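(* Let $Y$ be a real Banach space. Then $L(\ell_1,Y)$ has octahedral norm if and only if $Y$ has octahedral norm.
   Context: The norm of a Banach space $Z$ is octahedral if for every finite-dimensional subspace $E$ and $\varepsilon>0$ there is $y\in S_Z$ with $\|x+\lambda y\|\ge(1-\varepsilon)(\|x\|+|\lambda|)$ for all $x\in E$, scalars $\lambda$. $L(\ell_1,Y)$ is the space of bounded linear operators from $\ell_1$ to $Y$ with the operator norm. *)

theory Defs
  imports "HOL-Analysis.Analysis"
begin

typedef l1 = "{f :: nat \<Rightarrow> real. summable (\<lambda>n. \<bar>f n\<bar>)}"
  morphisms l1_fun Abs_l1
  by (rule exI[of _ "\<lambda>_. 0"]) simp

setup_lifting type_definition_l1

lemma l1_summable_add:
  assumes "summable (\<lambda>n. \<bar>f n\<bar>)" "summable (\<lambda>n. \<bar>g n\<bar>)"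
  shows "summable (\<lambda>n. \<bar>f n + g n\<bar> :: real)"
proof (rule summable_comparison_test[of _ "\<lambda>n. \<bar>f n\<bar> + \<bar>g n\<bar>"])
  show "\<exists>N. \<forall>n\<ge>N. norm \<bar>f n + g n\<bar> \<le> \<bar>f n\<bar> + \<bar>g n\<bar>" by auto
  show "summable (\<lambda>n. \<bar>f n\<bar> + \<bar>g n\<bar>)" using assms by (rule summable_add)
qed

instantiation l1 :: real_vector
begin
lift_definition zero_l1 :: l1 is "\<lambda>_. 0" by simp
lift_definition plus_l1 :: "l1 \<Rightarrow> l1 \<Rightarrow> l1" is "\<lambda>f g n. f n + g n"
  by (rule l1_summable_add)
lift_definition uminus_l1 :: "l1 \<Rightarrow> l1" is "\<lambda>f n. - f n" by simp
lift_definition minus_l1 :: "l1 \<Rightarrow> l1 \<Rightarrow> l1" is "\<lambda>f g n. f n - g n"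
  using l1_summable_add[of _ "\<lambda>n. - _ n"] by simp
lift_definition scaleR_l1 :: "real \<Rightarrow> l1 \<Rightarrow> l1" is "\<lambda>c f n. c * f n"
  by (simp add: abs_mult summable_mult)
instance
  by standard (transfer; auto simp: fun_eq_iff algebra_simps)+
end

instantiation l1 :: real_normed_vector
begin
lift_definition norm_l1 :: "l1 \<Rightarrow> real" is "\<lambda>f. \<Sum>n. \<bar>f n\<bar>" .
definition dist_l1 :: "l1 \<Rightarrow> l1 \<Rightarrow> real" where "dist_l1 x y = norm (x - y)"
definition sgn_l1 :: "l1 \<Rightarrow> l1" where "sgn_l1 x = x /\<^sub>R norm x"
definition uniformity_l1 :: "(l1 \<times> l1) filter" where
  "uniformity_l1 = (INF e\<in>{0<..}. principal {(x, y). dist x y < e})"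
definition open_l1 :: "l1 set \<Rightarrow> bool" where
  "open_l1 U = (\<forall>x\<in>U. eventually (\<lambda>(x', y). x' = x \<longrightarrow> y \<in> U) uniformity)"
instance
proof
  fix x y :: l1 and a :: real
  show "dist x y = norm (x - y)" by (simp add: dist_l1_def)
  show "sgn x = x /\<^sub>R norm x" by (simp add: sgn_l1_def)
  show "uniformity = (INF e\<in>{0<..}. principal {(x, y :: l1). dist x y < e})"
    by (simp add: uniformity_l1_def)
  show "open U = (\<forall>x\<in>U. eventually (\<lambda>(x', y). x' = x \<longrightarrow> y \<in> U) uniformity)"
    for U :: "l1 set" by (simp add: open_l1_def)
  show "(norm x = 0) = (x = 0)"
    by transfer (auto simp: suminf_eq_zero_iff fun_eq_iff)
  show "norm (x + y) \<le> norm x + norm y"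
  proof transfer
    fix f g :: "nat \<Rightarrow> real"
    assume f: "summable (\<lambda>n. \<bar>f n\<bar>)" and g: "summable (\<lambda>n. \<bar>g n\<bar>)"
    have "(\<Sum>n. \<bar>f n + g n\<bar>) \<le> (\<Sum>n. \<bar>f n\<bar> + \<bar>g n\<bar>)"
      by (rule suminf_le) (auto intro: l1_summable_add f g summable_add)
    also have "\<dots> = (\<Sum>n. \<bar>f n\<bar>) + (\<Sum>n. \<bar>g n\<bar>)"
      using f g by (rule suminf_add[symmetric])
    finally show "(\<Sum>n. \<bar>f n + g n\<bar>) \<le> (\<Sum>n. \<bar>f n\<bar>) + (\<Sum>n. \<bar>g n\<bar>)" .
  qed
  show "norm (a *\<^sub>R x) = \<bar>a\<bar> * norm x"
    by transfer (simp add: abs_mult suminf_mult)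
qed
end

definition octahedral_norm :: "'a::real_normed_vector itself \<Rightarrow> bool" where
  "octahedral_norm _ \<longleftrightarrow>
     (\<forall>F :: 'a set. finite F \<longrightarrow> (\<forall>\<epsilon>>0. \<exists>y. norm y = 1 \<and>
        (\<forall>x\<in>span F. \<forall>t::real. norm (x + t *\<^sub>R y) \<ge> (1 - \<epsilon>) * (norm x + \<bar>t\<bar>))))"

end

theory Submission
  imports Defs
begin

lemma l1_summ: "summable (\<lambda>n. \<bar>l1_fun f n\<bar>)"
  using l1_fun[of f] by simp

lift_definition ee :: "nat \<Rightarrow> l1" is "\<lambda>n k. if k = n then 1 else 0"
proof -
  fix n :: nat
  have "(\<lambda>k. \<bar>if k = n then 1 else 0 :: real\<bar>) = (\<lambda>k. if k = n then 1 else 0)" by auto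
  then show "summable (\<lambda>k. \<bar>if k = n then 1 else 0 :: real\<bar>)" using summable_single[of n "\<lambda>_. 1::real"] by simp
qed

lemma norm_ee: "norm (ee n) = 1"
proof -
  have "(\<lambda>k. \<bar>if k = n then 1 else 0 :: real\<bar>) = (\<lambda>k. if k = n then 1 else 0)" by auto
  then show ?thesis using sums_unique[OF sums_single[of n "\<lambda>_. 1::real"]] by (simp add: norm_l1.rep_eq ee.rep_eq)
qed

lift_definition trunc :: "nat \<Rightarrow> l1 \<Rightarrow> l1" is "\<lambda>N f k. if k < N then f k else 0"
proof -
  fix N and f :: "nat \<Rightarrow> real" assume "summable (\<lambda>n. \<bar>f n\<bar>)"
  then show "summable (\<lambda>n. \<bar>if n < N then f n else 0\<bar>)"
    by (rule summable_comparison_test'[where N=0]) auto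
qed

lemma trunc_sum: "trunc N f = (\<Sum>n<N. l1_fun f n *\<^sub>R ee n)"
proof (induction N)
  case 0
  have "trunc 0 f = 0" by transfer auto
  then show ?case by simp
next
  case (Suc N)
  have "trunc (Suc N) f = trunc N f + l1_fun f N *\<^sub>R ee N"
    by transfer (auto simp: fun_eq_iff less_Suc_eq)
  then show ?case using Suc by simp
qed

lemma trunc_lim: "(\<lambda>N. trunc N f) \<longlonglongrightarrow> f"
proof -
  have eq: "norm (trunc N f - f) = (\<Sum>n. \<bar>l1_fun f n\<bar>) - (\<Sum>n<N. \<bar>l1_fun f n\<bar>)" for N
  proof -
    let ?g = "\<lambda>k. \<bar>if k < N then 0 else l1_fun f k\<bar>"
    have "(\<lambda>k. \<bar>l1_fun (trunc N f - f) k\<bar>) = ?g"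
      by (auto simp: minus_l1.rep_eq trunc.rep_eq fun_eq_iff)
    then have ge: "norm (trunc N f - f) = suminf ?g"
      by (simp add: norm_l1.rep_eq)
    have sg: "summable ?g"
      by (rule summable_comparison_test'[where N=0, OF l1_summ[of f]]) auto
    have "suminf ?g = (\<Sum>n. ?g (n + N)) + sum ?g {..<N}"
      by (rule suminf_split_initial_segment[OF sg])
    also have "\<dots> = (\<Sum>n. \<bar>l1_fun f (n + N)\<bar>)" by simp
    also have "\<dots> = (\<Sum>n. \<bar>l1_fun f n\<bar>) - (\<Sum>n<N. \<bar>l1_fun f n\<bar>)"
      using suminf_split_initial_segment[OF l1_summ[of f], of N] by simp
    finally show ?thesis using ge by simp
  qed
  have "(\<lambda>N. (\<Sum>n. \<bar>l1_fun f n\<bar>) - (\<Sum>n<N. \<bar>l1_fun f n\<bar>)) \<longlonglongrightarrow> (\<Sum>n. \<bar>l1_fun f n\<bar>) - (\<Sum>n. \<bar>l1_fun f n\<bar>)"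
    by (intro tendsto_intros summable_LIMSEQ l1_summ)
  then have "(\<lambda>N. norm (trunc N f - f)) \<longlonglongrightarrow> 0" unfolding eq by simp
  then show ?thesis using tendsto_norm_zero_iff LIM_zero_cancel by blast
qed

lemma blinfun_expand:
  fixes T :: "l1 \<Rightarrow>\<^sub>L 'a::real_normed_vector"
  shows "(\<lambda>n. l1_fun f n *\<^sub>R blinfun_apply T (ee n)) sums blinfun_apply T f"
proof -
  have "(\<lambda>N. blinfun_apply T (trunc N f)) \<longlonglongrightarrow> blinfun_apply T f"
    by (intro tendsto_intros trunc_lim)
  moreover have "blinfun_apply T (trunc N f) = (\<Sum>n<N. l1_fun f n *\<^sub>R blinfun_apply T (ee n))" for N
    by (simp add: trunc_sum blinfun.sum_right blinfun.scaleR_right)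
  ultimately show ?thesis unfolding sums_def by simp
qed

lemma blinfun_norm_le:
  fixes T :: "l1 \<Rightarrow>\<^sub>L 'a::banach"
  assumes "\<And>n. norm (blinfun_apply T (ee n)) \<le> M"
  shows "norm T \<le> M"
proof -
  have M0: "0 \<le> M" using assms[of 0] norm_ge_zero order_trans by blast
  show ?thesis
  proof (rule norm_blinfun_bound[OF M0])
    fix f
    have "norm (blinfun_apply T f) = norm (\<Sum>n. l1_fun f n *\<^sub>R blinfun_apply T (ee n))"
      using blinfun_expand[of f T] sums_unique by metis
    also have "\<dots> \<le> (\<Sum>n. M * \<bar>l1_fun f n\<bar>)"
    proof (rule norm_suminf_le[where g="\<lambda>n. M * \<bar>l1_fun f n\<bar>"])
      show "summable (\<lambda>n. M * \<bar>l1_fun f n\<bar>)" by (intro summable_mult l1_summ)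
      fix n show "norm (l1_fun f n *\<^sub>R blinfun_apply T (ee n)) \<le> M * \<bar>l1_fun f n\<bar>"
        using assms[of n] by (simp add: mult.commute[of M]) (metis abs_ge_zero mult_left_mono)
    qed
    also have "\<dots> = M * norm f" by (simp add: norm_l1.rep_eq suminf_mult l1_summ)
    finally show "norm (blinfun_apply T f) \<le> M * norm f" .
  qed
qed

lemma abs_coord_le: "\<bar>l1_fun f k\<bar> \<le> norm f"
  using sum_le_suminf[OF l1_summ[of f], of "{k}"] by (simp add: norm_l1.rep_eq)

definition Sop :: "(nat \<Rightarrow> 'a::banach) \<Rightarrow> l1 \<Rightarrow> 'a" where
  "Sop y f = (\<Sum>n. l1_fun f n *\<^sub>R y n)"

lemma Sop_summ:
  assumes "\<And>n. norm (y n) \<le> 1"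
  shows "summable (\<lambda>n. norm (l1_fun f n *\<^sub>R y n))"
proof (rule summable_comparison_test'[where N=0, OF l1_summ[of f]])
  fix n show "norm (norm (l1_fun f n *\<^sub>R y n)) \<le> \<bar>l1_fun f n\<bar>"
    using assms[of n] by (simp add: mult_left_le)
qed

lemma Sop_bl:
  assumes "\<And>n. norm (y n) \<le> 1"
  shows "bounded_linear (Sop y)"
proof (rule bounded_linear_intro[where K=1])
  fix f g
  show "Sop y (f + g) = Sop y f + Sop y g"
    unfolding Sop_def using Sop_summ[OF assms, THEN summable_norm_cancel]
    by (simp add: plus_l1.rep_eq scaleR_add_left suminf_add)
next
  fix r f
  show "Sop y (r *\<^sub>R f) = r *\<^sub>R Sop y f"
    unfolding Sop_def using Sop_summ[OF assms, THEN summable_norm_cancel]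
    by (simp add: scaleR_l1.rep_eq suminf_scaleR_right)
next
  fix f
  have "norm (Sop y f) \<le> (\<Sum>n. norm (l1_fun f n *\<^sub>R y n))"
    unfolding Sop_def by (rule summable_norm[OF Sop_summ[OF assms]])
  also have "\<dots> \<le> (\<Sum>n. \<bar>l1_fun f n\<bar>)"
    by (rule suminf_le[OF _ Sop_summ[OF assms] l1_summ]) (use assms in \<open>simp add: mult_left_le\<close>)
  finally show "norm (Sop y f) \<le> norm f * 1" by (simp add: norm_l1.rep_eq)
qed

lemma Sop_ee: "Sop y (ee m) = y m"
proof -
  have "(\<lambda>n. l1_fun (ee m) n *\<^sub>R y n) = (\<lambda>n. if n = m then y n else 0)"
    by (auto simp: ee.rep_eq fun_eq_iff)
  then show ?thesis unfolding Sop_def using sums_unique[OF sums_single[of m y]] by simp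
qed

lemma oct_Y_imp_L:
  assumes oct: "octahedral_norm TYPE('a::banach)"
  shows "octahedral_norm TYPE(l1 \<Rightarrow>\<^sub>L 'a)"
  unfolding octahedral_norm_def
proof (intro allI impI)
  fix F :: "(l1 \<Rightarrow>\<^sub>L 'a) set" and \<epsilon> :: real
  assume fin: "finite F" and "\<epsilon> > 0"
  define ev where "ev n = (\<lambda>T::l1 \<Rightarrow>\<^sub>L 'a. blinfun_apply T (ee n))" for n
  have lin: "linear (ev n)" for n
    unfolding ev_def by (rule linearI) (simp_all add: plus_blinfun.rep_eq scaleR_blinfun.rep_eq)
  have "\<forall>n. \<exists>y. norm y = 1 \<and> (\<forall>x\<in>span (ev n ` F). \<forall>t::real. norm (x + t *\<^sub>R y) \<ge> (1 - \<epsilon>) * (norm x + \<bar>t\<bar>))"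
    using oct fin \<open>\<epsilon> > 0\<close> unfolding octahedral_norm_def by blast
  then obtain y where y1: "\<And>n. norm (y n) = 1"
    and yp: "\<And>n x t. x \<in> span (ev n ` F) \<Longrightarrow> norm (x + t *\<^sub>R y n) \<ge> (1 - \<epsilon>) * (norm x + \<bar>t\<bar>)"
    by metis
  have bl: "bounded_linear (Sop y)" using Sop_bl[of y] y1 by simp
  define S where "S = Blinfun (Sop y)"
  have Sapp: "blinfun_apply S (ee n) = y n" for n
    unfolding S_def by (simp add: bounded_linear_Blinfun_apply[OF bl] Sop_ee)
  have nS: "norm S = 1"
  proof (rule antisym)
    show "norm S \<le> 1" by (rule blinfun_norm_le) (simp add: Sapp y1)
    have "norm (blinfun_apply S (ee 0)) \<le> norm S * norm (ee 0)" by (rule norm_blinfun)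
    then show "1 \<le> norm S" by (simp add: Sapp y1 norm_ee)
  qed
  show "\<exists>S. norm S = 1 \<and> (\<forall>x\<in>span F. \<forall>t::real. norm (x + t *\<^sub>R S) \<ge> (1 - \<epsilon>) * (norm x + \<bar>t\<bar>))"
  proof (intro exI conjI ballI allI)
    show "norm S = 1" by (rule nS)
    fix T t assume T: "T \<in> span F"
    show "norm (T + t *\<^sub>R S) \<ge> (1 - \<epsilon>) * (norm T + \<bar>t\<bar>)"
    proof (cases "\<epsilon> \<ge> 1")
      case True
      then have "(1 - \<epsilon>) * (norm T + \<bar>t\<bar>) \<le> 0"
        by (intro mult_nonpos_nonneg) auto
      then show ?thesis using norm_ge_zero order_trans by blast
    next
      case False
      then have pe: "0 < 1 - \<epsilon>" by simp
      define M where "M = norm (T + t *\<^sub>R S) / (1 - \<epsilon>) - \<bar>t\<bar>"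
      have "norm (blinfun_apply T (ee n)) \<le> M" for n
      proof -
        have "ev n T \<in> span (ev n ` F)" using T span_linear_image[OF lin[of n], of F] by auto
        then have "(1 - \<epsilon>) * (norm (ev n T) + \<bar>t\<bar>) \<le> norm (ev n T + t *\<^sub>R y n)" by (rule yp)
        also have "ev n T + t *\<^sub>R y n = blinfun_apply (T + t *\<^sub>R S) (ee n)"
          by (simp add: ev_def plus_blinfun.rep_eq scaleR_blinfun.rep_eq Sapp)
        also have "norm \<dots> \<le> norm (T + t *\<^sub>R S) * norm (ee n)" by (rule norm_blinfun)
        finally have "(1 - \<epsilon>) * (norm (ev n T) + \<bar>t\<bar>) \<le> norm (T + t *\<^sub>R S)" by (simp add: norm_ee)
        then have "norm (ev n T) + \<bar>t\<bar> \<le> norm (T + t *\<^sub>R S) / (1 - \<epsilon>)"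
          using pe by (simp add: field_simps)
        then show ?thesis by (simp add: M_def ev_def)
      qed
      then have "norm T \<le> M" by (rule blinfun_norm_le)
      then have "norm T + \<bar>t\<bar> \<le> norm (T + t *\<^sub>R S) / (1 - \<epsilon>)" by (simp add: M_def)
      then show ?thesis using pe by (simp add: field_simps)
    qed
  qed
qed

definition Tx :: "'a::banach \<Rightarrow> (l1 \<Rightarrow>\<^sub>L 'a)" where
  "Tx x = Blinfun (\<lambda>f. l1_fun f 0 *\<^sub>R x)"

lemma Tx_bl: "bounded_linear (\<lambda>f. l1_fun f 0 *\<^sub>R (x::'a::banach))"
proof (rule bounded_linear_intro[where K="norm x"])
  fix f g show "l1_fun (f + g) 0 *\<^sub>R x = l1_fun f 0 *\<^sub>R x + l1_fun g 0 *\<^sub>R x"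
    by (simp add: plus_l1.rep_eq scaleR_add_left)
next
  fix r f show "l1_fun (r *\<^sub>R f) 0 *\<^sub>R x = r *\<^sub>R (l1_fun f 0 *\<^sub>R x)"
    by (simp add: scaleR_l1.rep_eq)
next
  fix f show "norm (l1_fun f 0 *\<^sub>R x) \<le> norm f * norm x"
    using abs_coord_le[of f 0] by (simp add: mult_right_mono)
qed

lemma Tx_apply: "blinfun_apply (Tx x) f = l1_fun f 0 *\<^sub>R x"
  unfolding Tx_def by (simp add: bounded_linear_Blinfun_apply[OF Tx_bl])

lemma Tx_linear: "linear Tx"
  by (rule linearI) (auto intro!: blinfun_eqI simp: Tx_apply plus_blinfun.rep_eq scaleR_blinfun.rep_eq scaleR_add_right)

lemma Tx_norm_ge: "norm x \<le> norm (Tx x)"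
proof -
  have "norm (blinfun_apply (Tx x) (ee 0)) \<le> norm (Tx x) * norm (ee 0)" by (rule norm_blinfun)
  then show ?thesis by (simp add: Tx_apply ee.rep_eq norm_ee)
qed

lemma oct_L_imp_Y:
  assumes oct: "octahedral_norm TYPE(l1 \<Rightarrow>\<^sub>L 'a::banach)"
  shows "octahedral_norm TYPE('a)"
  unfolding octahedral_norm_def
proof (intro allI impI)
  fix F :: "'a set" and \<epsilon> :: real
  assume fin: "finite F" and ep: "\<epsilon> > 0"
  have octL: "\<And>G \<delta>. finite G \<Longrightarrow> \<delta> > 0 \<Longrightarrow> \<exists>S::l1 \<Rightarrow>\<^sub>L 'a. norm S = 1 \<and> (\<forall>x\<in>span G. \<forall>t::real. norm (x + t *\<^sub>R S) \<ge> (1 - \<delta>) * (norm x + \<bar>t\<bar>))"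
    using oct unfolding octahedral_norm_def by blast
  obtain S0 :: "l1 \<Rightarrow>\<^sub>L 'a" where "norm S0 = 1" using octL[of "{}" 1] by auto
  have "\<exists>n. blinfun_apply S0 (ee n) \<noteq> 0"
  proof (rule ccontr)
    assume "\<nexists>n. blinfun_apply S0 (ee n) \<noteq> 0"
    then have "norm S0 \<le> 0" by (intro blinfun_norm_le) simp
    with \<open>norm S0 = 1\<close> show False by simp
  qed
  then obtain w0 where "w0 \<noteq> (0::'a)" by blast
  define w where "w = w0 /\<^sub>R norm w0"
  have nw: "norm w = 1" using \<open>w0 \<noteq> 0\<close> by (simp add: w_def)
  define \<delta> where "\<delta> = min (\<epsilon> / 3) (1/4)"
  have d0: "\<delta> > 0" and d1: "\<delta> \<le> 1/4" and d2: "3 * \<delta> \<le> \<epsilon>" using ep by (auto simp: \<delta>_def)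
  obtain S :: "l1 \<Rightarrow>\<^sub>L 'a" where nS: "norm S = 1"
    and Sp: "\<And>X t. X \<in> span (Tx ` insert w F) \<Longrightarrow> norm (X + t *\<^sub>R S) \<ge> (1 - \<delta>) * (norm X + \<bar>t\<bar>)"
    using octL[of "Tx ` insert w F" \<delta>] fin d0 by auto
  define z where "z = blinfun_apply S (ee 0)"
  have Sn: "norm (blinfun_apply S (ee n)) \<le> 1" for n
    using norm_blinfun[of S "ee n"] by (simp add: nS norm_ee)
  have zle: "norm z \<le> 1" using Sn by (simp add: z_def)
  have key: "norm (Tx x + t *\<^sub>R S) \<le> max (norm (x + t *\<^sub>R z)) \<bar>t\<bar>" for x t
  proof (rule blinfun_norm_le)
    fix n
    show "norm (blinfun_apply (Tx x + t *\<^sub>R S) (ee n)) \<le> max (norm (x + t *\<^sub>R z)) \<bar>t\<bar>"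
    proof (cases "n = 0")
      case True then show ?thesis by (simp add: Tx_apply ee.rep_eq plus_blinfun.rep_eq scaleR_blinfun.rep_eq z_def)
    next
      case False
      then have "norm (blinfun_apply (Tx x + t *\<^sub>R S) (ee n)) = \<bar>t\<bar> * norm (blinfun_apply S (ee n))"
        by (simp add: Tx_apply ee.rep_eq plus_blinfun.rep_eq scaleR_blinfun.rep_eq)
      also have "\<dots> \<le> \<bar>t\<bar>" using Sn[of n] by (simp add: mult_left_le)
      finally show ?thesis by simp
    qed
  qed
  have main: "(1 - \<delta>) * (norm x + \<bar>t\<bar>) \<le> max (norm (x + t *\<^sub>R z)) \<bar>t\<bar>" if "x \<in> span (insert w F)" for x t
  proof -
    have "Tx x \<in> span (Tx ` insert w F)" using that span_linear_image[OF Tx_linear, of "insert w F"] by auto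
    then have "(1 - \<delta>) * (norm (Tx x) + \<bar>t\<bar>) \<le> norm (Tx x + t *\<^sub>R S)" by (rule Sp)
    moreover have "(1 - \<delta>) * (norm x + \<bar>t\<bar>) \<le> (1 - \<delta>) * (norm (Tx x) + \<bar>t\<bar>)"
      using Tx_norm_ge[of x] d1 by (intro mult_left_mono) auto
    ultimately show ?thesis using key[of x t] by linarith
  qed
  have zge: "norm z \<ge> 1 - 2 * \<delta>"
  proof -
    have "(1 - \<delta>) * (norm w + \<bar>1\<bar>) \<le> max (norm (w + 1 *\<^sub>R z)) \<bar>1\<bar>"
      by (rule main) (simp add: span_base)
    then have "2 - 2 * \<delta> \<le> max (norm (w + z)) 1" using nw by (simp add: algebra_simps)
    then have "2 - 2 * \<delta> \<le> norm (w + z)" using d1 by (auto simp: max_def split: if_splits)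
    moreover have "norm (w + z) \<le> 1 + norm z" using norm_triangle_ineq[of w z] nw by simp
    ultimately show ?thesis by simp
  qed
  have zpos: "norm z > 0" using zge d1 by linarith
  define y where "y = z /\<^sub>R norm z"
  have ny: "norm y = 1" using zpos by (simp add: y_def)
  have zy: "norm (t *\<^sub>R z - t *\<^sub>R y) \<le> 2 * \<delta> * \<bar>t\<bar>" for t
  proof -
    have "t *\<^sub>R z - t *\<^sub>R y = (t * (1 - 1 / norm z)) *\<^sub>R z" by (simp add: y_def algebra_simps divide_inverse)
    then have "norm (t *\<^sub>R z - t *\<^sub>R y) = \<bar>t\<bar> * (\<bar>1 - 1 / norm z\<bar> * norm z)" by (simp add: abs_mult)
    also have "\<bar>1 - 1 / norm z\<bar> * norm z = 1 - norm z"
    proof -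
      have "1 / norm z \<ge> 1" using zpos zle by simp
      then have "\<bar>1 - 1 / norm z\<bar> = 1 / norm z - 1" by simp
      moreover have "(1 / norm z - 1) * norm z = 1 - norm z" using zpos by (simp add: field_simps)
      ultimately show ?thesis by simp
    qed
    also have "\<bar>t\<bar> * (1 - norm z) \<le> \<bar>t\<bar> * (2 * \<delta>)" using zge by (intro mult_left_mono) auto
    finally show ?thesis by (simp add: mult.commute)
  qed
  show "\<exists>y. norm y = 1 \<and> (\<forall>x\<in>span F. \<forall>t::real. norm (x + t *\<^sub>R y) \<ge> (1 - \<epsilon>) * (norm x + \<bar>t\<bar>))"
  proof (intro exI conjI ballI allI)
    show "norm y = 1" by (rule ny)
    fix x and t :: real assume "x \<in> span F"
    then have xs: "x \<in> span (insert w F)" by (meson span_mono subset_insertI subsetD)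
    define a where "a = norm x"
    define b where "b = \<bar>t\<bar>"
    have ab: "a \<ge> 0" "b \<ge> 0" by (auto simp: a_def b_def)
    have ee: "(1 - \<epsilon>) * (a + b) \<le> (1 - 3 * \<delta>) * (a + b)"
      using d2 ab by (intro mult_right_mono) auto
    from main[OF xs, of t]
    have "(1 - \<delta>) * (a + b) \<le> norm (x + t *\<^sub>R z) \<or> (1 - \<delta>) * (a + b) \<le> b"
      by (auto simp: a_def b_def max_def split: if_splits)
    then show "(1 - \<epsilon>) * (norm x + \<bar>t\<bar>) \<le> norm (x + t *\<^sub>R y)"
    proof
      assume A: "(1 - \<delta>) * (a + b) \<le> norm (x + t *\<^sub>R z)"
      have "norm (x + t *\<^sub>R z) \<le> norm (x + t *\<^sub>R y) + norm (t *\<^sub>R z - t *\<^sub>R y)"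
        using norm_triangle_ineq[of "x + t *\<^sub>R y" "t *\<^sub>R z - t *\<^sub>R y"] by simp
      then have "(1 - \<delta>) * (a + b) - 2 * \<delta> * b \<le> norm (x + t *\<^sub>R y)"
        using A zy[of t] by (simp add: b_def)
      moreover have "(1 - 3 * \<delta>) * (a + b) \<le> (1 - \<delta>) * (a + b) - 2 * \<delta> * b"
        using ab d0 by (simp add: algebra_simps)
      ultimately show ?thesis using ee by (simp add: a_def b_def)
    next
      assume B: "(1 - \<delta>) * (a + b) \<le> b"
      have "norm (t *\<^sub>R y) \<le> norm (x + t *\<^sub>R y) + norm x"
        using norm_triangle_ineq[of "x + t *\<^sub>R y" "- x"] by simp
      then have "b - a \<le> norm (x + t *\<^sub>R y)" using ny by (simp add: a_def b_def)
      moreover have "(1 - 3 * \<delta>) * (a + b) \<le> b - a"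
      proof -
        have "(1 - 2 * \<delta>) * (a + b) \<le> b - a" using B by (simp add: algebra_simps)
        moreover have "(1 - 3 * \<delta>) * (a + b) \<le> (1 - 2 * \<delta>) * (a + b)"
          using ab d0 by (intro mult_right_mono) auto
        ultimately show ?thesis by linarith
      qed
      ultimately show ?thesis using ee by (simp add: a_def b_def)
    qed
  qed
qed

theorem mainTheorem15:
  shows "octahedral_norm TYPE(l1 \<Rightarrow>\<^sub>L 'a::banach) \<longleftrightarrow> octahedral_norm TYPE('a)"
  using oct_L_imp_Y oct_Y_imp_L by blast

end
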